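(* Let $x>0$, $t>0$ and, for $\mu>0$, let $T(\mu)=\sqrt{\mu^2/4-1}$ with $\Im T\ge0$. Let $f(z,\mu)$ be defined for $\Im z\ge0$ by $f(z,\mu)=\left(\frac{\mu}{2}-z\right)\left[\frac{\pi i}{2}+\ln\left(\frac{\mu}{2}-z\right)\right]+\frac{z+T}{2}\ln(z+T)+\frac{z-T}{2}\ln(z-T)-T\tanh^{-1}\frac{T}{\mu/2}-xz-2tz^2+\frac{\mu}{2}\ln 2$ and by $f(z,\mu)=\overline{f(\bar z,\mu)}$ for $\Im z<0$. Then $f(z,\mu)$ and $f'(z,\mu)=\frac{\partial f}{\partial z}(z,\mu)$ are analytic in $\mu$ for $\mu>0$, for every $z$ with $\Im z\neq 0$ and $z\notin[-T(\mu),T(\mu)]$.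
   Context: Branch cuts of the logarithms: for $0<\mu<2$ (where $T$ is purely imaginary with $\Im T>0$), from $\mu/2$ along the real axis to $+\infty$, from $T$ to $0$ and then along the real axis to $+\infty$, from $-T$ to $0$ and then along the real axis to $-\infty$; for $\mu\ge 2$ (where $T\ge0$), from $T$ to $+\infty$ and from $-T$ to $-\infty$ along the real axis. $[-T,T]$ denotes the straight segment from $-T$ to $T$. *)

theory Defs
  imports "HOL-Analysis.Analysis"
begin

text \<open>T(mu) = sqrt(mu^2/4 - 1) with Im T >= 0 (csqrt of a negative real is i*sqrt).\<close>
definition T :: "real \<Rightarrow> complex" where
  "T \<mu> = csqrt (complex_of_real (\<mu>^2 / 4 - 1))"

definition cartanh :: "complex \<Rightarrow> complex" where
  "cartanh u = (Ln (1 + u) - Ln (1 - u)) / 2"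

text \<open>Logarithm with argument in (-pi/2, 3pi/2], i.e. cut along the negative imaginary axis.
  Used for ln(z - T): on the upper half plane Im z > 0 its cut is exactly the segment
  from T to 0 (for 0 < mu < 2), and for mu >= 2 it agrees with the principal log there.\<close>
definition ln_rot :: "complex \<Rightarrow> complex" where
  "ln_rot w = Ln (- \<i> * w) + \<i> * complex_of_real pi / 2"

definition f_upper :: "real \<Rightarrow> real \<Rightarrow> complex \<Rightarrow> real \<Rightarrow> complex" where
  "f_upper x t z \<mu> =
     (complex_of_real (\<mu>/2) - z) * (\<i> * complex_of_real pi / 2 + Ln (complex_of_real (\<mu>/2) - z))
   + (z + T \<mu>) / 2 * Ln (z + T \<mu>)
   + (z - T \<mu>) / 2 * ln_rot (z - T \<mu>)
   - T \<mu> * cartanh (T \<mu> / complex_of_real (\<mu>/2))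
   - complex_of_real x * z - 2 * complex_of_real t * z^2
   + complex_of_real (\<mu>/2 * ln 2)"

definition f :: "real \<Rightarrow> real \<Rightarrow> complex \<Rightarrow> real \<Rightarrow> complex" where
  "f x t z \<mu> = (if Im z \<ge> 0 then f_upper x t z \<mu> else cnj (f_upper x t (cnj z) \<mu>))"

definition real_analytic_at :: "(real \<Rightarrow> complex) \<Rightarrow> real \<Rightarrow> bool" where
  "real_analytic_at g a \<longleftrightarrow>
     (\<exists>r>0. \<exists>c::nat \<Rightarrow> complex. \<forall>\<nu>. \<bar>\<nu> - a\<bar> < r \<longrightarrow>
        (\<lambda>n. c n * complex_of_real (\<nu> - a) ^ n) sums g \<nu>)"

end

theory Submission
  imports Defs "HOL-Complex_Analysis.Complex_Analysis"
begin


lemma RA_hol: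
  assumes hol: "G holomorphic_on S" and S: "open S" and a: "complex_of_real a \<in> S"
    and eq: "\<And>\<nu>. complex_of_real \<nu> \<in> S \<Longrightarrow> g \<nu> = G (of_real \<nu>)"
  shows "real_analytic_at g a"
proof -
  obtain r where r: "r > 0" "ball (complex_of_real a) r \<subseteq> S"
    using S a openE by blast
  have hb: "G holomorphic_on ball (complex_of_real a) r"
    using hol r holomorphic_on_subset by blast
  show ?thesis
    unfolding real_analytic_at_def
  proof (intro exI conjI allI impI)
    fix \<nu> assume "\<bar>\<nu> - a\<bar> < r"
    then have w: "complex_of_real \<nu> \<in> ball (complex_of_real a) r"
      by (simp add: dist_complex_def dist_norm norm_of_real flip: of_real_diff)
    have "(\<lambda>n. (deriv ^^ n) G (of_real a) / fact n * (of_real \<nu> - of_real a)^n) sums G (of_real \<nu>)"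
      by (rule holomorphic_power_series[OF hb w])
    then show "(\<lambda>n. (deriv ^^ n) G (of_real a) / fact n * complex_of_real (\<nu> - a) ^ n) sums g \<nu>"
      using eq[of \<nu>] w r by (simp add: subset_iff)
  qed (use r in auto)
qed

lemma RA_cnj:
  assumes "real_analytic_at g a"
  shows "real_analytic_at (\<lambda>\<nu>. cnj (g \<nu>)) a"
proof -
  obtain r c where r: "r > 0" and s: "\<And>\<nu>. \<bar>\<nu> - a\<bar> < r \<Longrightarrow>
        (\<lambda>n. c n * complex_of_real (\<nu> - a) ^ n) sums g \<nu>"
    using assms unfolding real_analytic_at_def by blast
  show ?thesis unfolding real_analytic_at_def
  proof (intro exI[of _ r] exI[of _ "\<lambda>n. cnj (c n)"] conjI allI impI)
    fix \<nu> assume "\<bar>\<nu> - a\<bar> < r"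
    from s[OF this] have "(\<lambda>n. cnj (c n * complex_of_real (\<nu> - a) ^ n)) sums cnj (g \<nu>)"
      by (simp only: sums_cnj)
    then show "(\<lambda>n. cnj (c n) * complex_of_real (\<nu> - a) ^ n) sums cnj (g \<nu>)" by simp
  qed (use r in auto)
qed

lemma RA_cong:
  assumes "real_analytic_at h a" "e > 0" "\<And>\<nu>. \<bar>\<nu> - a\<bar> < e \<Longrightarrow> g \<nu> = h \<nu>"
  shows "real_analytic_at g a"
proof -
  obtain r c where r: "r > 0" and s: "\<And>\<nu>. \<bar>\<nu> - a\<bar> < r \<Longrightarrow>
        (\<lambda>n. c n * complex_of_real (\<nu> - a) ^ n) sums h \<nu>"
    using assms unfolding real_analytic_at_def by blast
  show ?thesis unfolding real_analytic_at_def
    by (rule exI[of _ "min r e"]) (use r assms s in auto)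
qed



definition FU :: "real \<Rightarrow> real \<Rightarrow> complex \<Rightarrow> complex \<Rightarrow> complex \<Rightarrow> complex" where
 "FU x t z m \<tau> = (m/2 - z) * (\<i> * of_real pi/2 + Ln (m/2 - z)) + (z+\<tau>)/2 * Ln(z+\<tau>)
    + (z-\<tau>)/2 * (Ln(-\<i>*(z-\<tau>)) + \<i> * of_real pi / 2)
    - \<tau> * ((Ln(1 + \<tau>/(m/2)) - Ln(1 - \<tau>/(m/2)))/2)
    - of_real x * z - 2 * of_real t * z^2 + m/2 * of_real (ln 2)"

definition DU :: "real \<Rightarrow> real \<Rightarrow> complex \<Rightarrow> complex \<Rightarrow> complex \<Rightarrow> complex" where
 "DU x t z m \<tau> = - (\<i> * of_real pi/2) - Ln(m/2 - z) + (Ln(z+\<tau>) + (Ln(-\<i>*(z-\<tau>)) + \<i> * of_real pi/2))/2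
    - of_real x - 4 * of_real t * z"

definition cond :: "complex \<Rightarrow> complex \<Rightarrow> complex \<Rightarrow> bool" where
 "cond z m \<tau> \<longleftrightarrow> m/2 - z \<notin> \<real>\<^sub>\<le>\<^sub>0 \<and> z+\<tau> \<notin> \<real>\<^sub>\<le>\<^sub>0 \<and> -\<i>*(z-\<tau>) \<notin> \<real>\<^sub>\<le>\<^sub>0
    \<and> 1 + \<tau>/(m/2) \<notin> \<real>\<^sub>\<le>\<^sub>0 \<and> 1 - \<tau>/(m/2) \<notin> \<real>\<^sub>\<le>\<^sub>0 \<and> m \<noteq> 0"

lemma fu_eq: "f_upper x t z \<nu> = FU x t z (of_real \<nu>) (T \<nu>)"
  unfolding f_upper_def FU_def ln_rot_def cartanh_def by simp

lemma FU_deriv: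
  assumes "m/2 - z \<notin> \<real>\<^sub>\<le>\<^sub>0" "z+\<tau> \<notin> \<real>\<^sub>\<le>\<^sub>0" "-\<i>*(z-\<tau>) \<notin> \<real>\<^sub>\<le>\<^sub>0"
  shows "((\<lambda>w. FU x t w m \<tau>) has_field_derivative DU x t z m \<tau>) (at z)"
proof -
  have n1: "m/2 - z \<noteq> 0" "z + \<tau> \<noteq> 0" "z - \<tau> \<noteq> 0" using assms by auto
  show ?thesis
    unfolding FU_def DU_def
    apply (rule derivative_eq_intros refl assms | simp)+
    using n1 by (simp add: field_simps)
qed

lemma hol_FU:
  assumes "g holomorphic_on S" "\<And>m. m \<in> S \<Longrightarrow> cond z m (g m)"
  shows "(\<lambda>m. FU x t z m (g m)) holomorphic_on S"
  using assms unfolding FU_def cond_def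
  by (intro holomorphic_intros) auto

lemma hol_DU:
  assumes "g holomorphic_on S" "\<And>m. m \<in> S \<Longrightarrow> cond z m (g m)"
  shows "(\<lambda>m. DU x t z m (g m)) holomorphic_on S"
  using assms unfolding DU_def cond_def
  by (intro holomorphic_intros) auto

lemma open_cond:
  assumes "open A" "continuous_on A g"
  shows "open {m \<in> A. cond z m (g m)}"
proof -
  define A' where "A' = A - {0}"
  have oA: "open A'" using assms by (simp add: A'_def open_Diff)
  have cA: "continuous_on A' g" using assms(2) by (auto simp: A'_def intro: continuous_on_subset)
  have o: "open (A' \<inter> h -` (- \<real>\<^sub>\<le>\<^sub>0))" if "continuous_on A' h" for h :: "complex \<Rightarrow> complex"
    by (rule continuous_open_preimage[OF that oA]) auto
  have nz: "\<And>m. m \<in> A' \<Longrightarrow> m/2 \<noteq> 0" by (auto simp: A'_def)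
  have "{m \<in> A. cond z m (g m)} =
     (A' \<inter> (\<lambda>m. m/2 - z) -` (- \<real>\<^sub>\<le>\<^sub>0)) \<inter> (A' \<inter> (\<lambda>m. z + g m) -` (- \<real>\<^sub>\<le>\<^sub>0))
     \<inter> (A' \<inter> (\<lambda>m. -\<i>*(z - g m)) -` (- \<real>\<^sub>\<le>\<^sub>0)) \<inter> (A' \<inter> (\<lambda>m. 1 + g m/(m/2)) -` (- \<real>\<^sub>\<le>\<^sub>0))
     \<inter> (A' \<inter> (\<lambda>m. 1 - g m/(m/2)) -` (- \<real>\<^sub>\<le>\<^sub>0))"
    by (auto simp: A'_def cond_def)
  also have "open \<dots>"
    using nz cA by (intro open_Int o continuous_intros) auto
  finally show ?thesis .
qed



lemma even_sqrt_hol: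
  assumes r: "r > 0" and hol: "K holomorphic_on ball 0 r"
    and ev: "\<And>\<tau>. \<tau> \<in> ball 0 r \<Longrightarrow> K (-\<tau>) = K \<tau>"
  shows "(\<lambda>s. K (csqrt s)) holomorphic_on ball 0 (r^2)"
proof -
  have inb: "csqrt s \<in> ball 0 r" if "s \<in> ball 0 (r^2)" for s
  proof -
    have "norm s < r^2" using that by simp
    then have "sqrt (norm s) < sqrt (r^2)" by (rule real_sqrt_less_mono)
    then show ?thesis using r by simp
  qed
  have inb2: "\<i> * csqrt (-s) \<in> ball 0 r" if "s \<in> ball 0 (r^2)" for s
    using inb[of "-s"] that by (simp add: norm_mult)
  define U1 where "U1 = ball (0::complex) (r^2) \<inter> - \<real>\<^sub>\<le>\<^sub>0"
  define U2 where "U2 = ball (0::complex) (r^2) \<inter> - \<real>\<^sub>\<ge>\<^sub>0"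
  have oU: "open U1" "open U2" unfolding U1_def U2_def
    by (intro open_Int open_ball open_Compl closed_nonpos_Reals_complex closed_nonneg_Reals_complex)+
  have h1: "(\<lambda>s. K (csqrt s)) holomorphic_on U1"
  proof -
    have "(K \<circ> csqrt) holomorphic_on U1"
      by (rule holomorphic_on_compose)
         (auto simp: U1_def intro: holomorphic_on_subset[OF holomorphic_on_csqrt]
            holomorphic_on_subset[OF hol] inb)
    then show ?thesis by (simp add: o_def)
  qed
  have h2: "(\<lambda>s. K (csqrt s)) holomorphic_on U2"
  proof (rule holomorphic_transform)
    have hs: "(\<lambda>s. \<i> * csqrt (-s)) holomorphic_on U2"
      by (intro holomorphic_intros) (auto simp: U2_def complex_nonpos_Reals_iff complex_nonneg_Reals_iff)
    have "(K \<circ> (\<lambda>s. \<i> * csqrt (-s))) holomorphic_on U2"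
      by (rule holomorphic_on_compose[OF hs])
         (auto simp: U2_def intro: holomorphic_on_subset[OF hol] inb2)
    then show "(\<lambda>s. K (\<i> * csqrt (-s))) holomorphic_on U2" by (simp add: o_def)
  next
    fix s assume s: "s \<in> U2"
    have "(\<i> * csqrt (-s))^2 = (csqrt s)^2" by (simp add: power_mult_distrib)
    then have "\<i> * csqrt (-s) = csqrt s \<or> \<i> * csqrt (-s) = - csqrt s"
      using power2_eq_iff by blast
    then show "K (\<i> * csqrt (-s)) = K (csqrt s)"
      using ev[OF inb2, of s] s by (auto simp: U2_def)
  qed
  have U: "U1 \<union> U2 = ball 0 (r^2) - {0}"
    by (auto simp: U1_def U2_def complex_nonpos_Reals_iff complex_nonneg_Reals_iff complex_eq_iff)
  have h12: "(\<lambda>s. K (csqrt s)) holomorphic_on (ball 0 (r^2) - {0})"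
    using holomorphic_on_Un[OF h1 h2 oU] U by simp
  have lim0: "(csqrt \<longlongrightarrow> 0) (at 0)"
  proof -
    have "((\<lambda>s::complex. sqrt (norm s)) \<longlongrightarrow> sqrt (norm (0::complex))) (at 0)"
      by (intro tendsto_intros)
    then have "((\<lambda>s. norm (csqrt s)) \<longlongrightarrow> 0) (at (0::complex))" by simp
    then show ?thesis by (rule tendsto_norm_zero_cancel)
  qed
  have "isCont K 0"
    using continuous_on_eq_continuous_at[OF open_ball, of 0 r K] holomorphic_on_imp_continuous_on[OF hol] r by auto
  then have "((\<lambda>s. K (csqrt s)) \<longlongrightarrow> K 0) (at 0)"
    using isCont_tendsto_compose lim0 by blast
  then have "((\<lambda>s. K (csqrt s)) \<longlongrightarrow> K 0) (at 0 within ball 0 (r^2))"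
    by (rule tendsto_mono[OF at_le[OF subset_UNIV]])
  then have lim: "((\<lambda>s. K (csqrt s)) \<longlongrightarrow> K (csqrt 0)) (at 0 within ball 0 (r^2))"
    by simp
  show ?thesis
    by (rule no_isolated_singularity'[of "{0}"]) (use lim h12 in auto)
qed

lemma Ln_rot_eq:
  assumes "Im w > 0"
  shows "Ln (-\<i> * w) + \<i> * of_real pi / 2 = Ln w"
proof -
  have w: "w \<noteq> 0" using assms by auto
  have re: "Re (-\<i> * w) > 0" using assms by simp
  then have b: "\<bar>Im (Ln (-\<i> * w))\<bar> < pi/2" by (rule Re_Ln_pos_lt_imp)
  let ?u = "Ln (-\<i> * w) + \<i> * of_real pi / 2"
  have e: "exp ?u = w"
  proof -
    have "exp ?u = exp (Ln (-\<i> * w)) * exp (\<i> * of_real (pi/2))"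
      by (simp add: exp_add)
    also have "exp (\<i> * of_real (pi/2)) = \<i>"
      using cis_conv_exp[of "pi/2"] by (simp add: complex_eq_iff)
    then have "exp (Ln (-\<i> * w)) * exp (\<i> * of_real (pi/2)) = (-\<i> * w) * \<i>" using w by simp
    finally show ?thesis by (simp add: ac_simps)
  qed
  have "Ln (exp ?u) = ?u" by (rule Ln_exp) (use b in auto)
  then show ?thesis using e by simp
qed



lemma ball_real: "complex_of_real \<nu> \<in> ball (complex_of_real \<mu>) e \<longleftrightarrow> \<bar>\<nu> - \<mu>\<bar> < e"
  by (simp add: dist_of_real dist_real_def abs_minus_commute)

lemma case_gen:
  assumes oA: "open A" and mA: "complex_of_real \<mu> \<in> A" and hg: "g holomorphic_on A"
    and gT: "\<And>\<nu>. complex_of_real \<nu> \<in> A \<Longrightarrow> g (of_real \<nu>) = T \<nu>"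
    and c: "cond z (of_real \<mu>) (g (of_real \<mu>))"
  shows "(\<exists>e>0. \<forall>\<nu>. \<bar>\<nu>-\<mu>\<bar><e \<longrightarrow> cond z (of_real \<nu>) (T \<nu>))
     \<and> real_analytic_at (\<lambda>\<nu>. FU x t z (of_real \<nu>) (T \<nu>)) \<mu>
     \<and> real_analytic_at (\<lambda>\<nu>. DU x t z (of_real \<nu>) (T \<nu>)) \<mu>"
proof -
  define S where "S = {m \<in> A. cond z m (g m)}"
  have oS: "open S" unfolding S_def
    by (rule open_cond[OF oA holomorphic_on_imp_continuous_on[OF hg]])
  have mS: "of_real \<mu> \<in> S" using mA c by (simp add: S_def)
  have hS: "g holomorphic_on S" by (rule holomorphic_on_subset[OF hg]) (auto simp: S_def)
  have cS: "\<And>m. m\<in>S \<Longrightarrow> cond z m (g m)" by (simp add: S_def)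
  have eqS: "\<And>\<nu>. complex_of_real \<nu> \<in> S \<Longrightarrow> g (of_real \<nu>) = T \<nu>" using gT by (auto simp: S_def)
  obtain e where e: "e > 0" "ball (complex_of_real \<mu>) e \<subseteq> S" using openE[OF oS mS] by blast
  show ?thesis
  proof (intro conjI)
    show "\<exists>e>0. \<forall>\<nu>. \<bar>\<nu>-\<mu>\<bar><e \<longrightarrow> cond z (of_real \<nu>) (T \<nu>)"
    proof (intro exI[of _ e] conjI allI impI)
      fix \<nu> assume "\<bar>\<nu>-\<mu>\<bar><e"
      then have "complex_of_real \<nu> \<in> S" using e ball_real by blast
      then show "cond z (of_real \<nu>) (T \<nu>)" using cS eqS by metis
    qed (use e in auto)
    show "real_analytic_at (\<lambda>\<nu>. FU x t z (of_real \<nu>) (T \<nu>)) \<mu>"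
    proof (rule RA_hol[OF hol_FU[OF hS cS, of x t] oS mS])
      fix \<nu> assume "complex_of_real \<nu> \<in> S"
      then have "g (of_real \<nu>) = T \<nu>" by (rule eqS)
      then show "FU x t z (of_real \<nu>) (T \<nu>) = FU x t z (of_real \<nu>) (g (of_real \<nu>))" by simp
    qed
    show "real_analytic_at (\<lambda>\<nu>. DU x t z (of_real \<nu>) (T \<nu>)) \<mu>"
    proof (rule RA_hol[OF hol_DU[OF hS cS, of x t] oS mS])
      fix \<nu> assume "complex_of_real \<nu> \<in> S"
      then have "g (of_real \<nu>) = T \<nu>" by (rule eqS)
      then show "DU x t z (of_real \<nu>) (T \<nu>) = DU x t z (of_real \<nu>) (g (of_real \<nu>))" by simp
    qed
  qed
qed

lemma case_two:
  fixes E :: "complex \<Rightarrow> complex \<Rightarrow> complex"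
  assumes oB: "open B" and B0: "0 \<in> B" and hol: "(\<lambda>\<tau>. E (2 * csqrt (1+\<tau>^2)) \<tau>) holomorphic_on B"
   and ev: "\<And>\<tau>. \<tau> \<in> B \<Longrightarrow> - \<tau> \<in> B \<Longrightarrow> E (2*csqrt(1+\<tau>^2)) (-\<tau>) = E (2*csqrt(1+\<tau>^2)) \<tau>"
  shows "(\<exists>e>0. \<forall>\<nu>. \<bar>\<nu>-2\<bar><e \<longrightarrow> T \<nu> \<in> B) \<and> real_analytic_at (\<lambda>\<nu>. E (of_real \<nu>) (T \<nu>)) 2"
proof -
  obtain r where r: "r > 0" "ball 0 r \<subseteq> B" using openE[OF oB B0] by blast
  define K where "K \<tau> = E (2*csqrt(1+\<tau>^2)) \<tau>" for \<tau>
  have hK: "K holomorphic_on ball 0 r"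
    unfolding K_def using holomorphic_on_subset[OF hol r(2)] .
  have eK: "K (-\<tau>) = K \<tau>" if "\<tau> \<in> ball 0 r" for \<tau>
  proof -
    have "-\<tau> \<in> ball 0 r" using that by simp
    then have "\<tau> \<in> B" "-\<tau> \<in> B" using that r(2) by blast+
    then show ?thesis unfolding K_def using ev[of \<tau>] by simp
  qed
  have hP: "(\<lambda>s. K (csqrt s)) holomorphic_on ball 0 (r^2)"
    by (rule even_sqrt_hol[OF r(1) hK eK])
  define S where "S = {m. Re m > 0} \<inter> (\<lambda>m::complex. m^2/4 - 1) -` ball 0 (r^2)"
  have oS: "open S" unfolding S_def
    by (intro open_Int open_halfspace_Re_gt continuous_open_vimage open_ball) (auto intro!: continuous_intros)
  have mS: "complex_of_real 2 \<in> S" using r by (simp add: S_def)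
  have hG: "(\<lambda>m. K (csqrt (m^2/4 - 1))) holomorphic_on S"
  proof -
    have "((\<lambda>s. K (csqrt s)) \<circ> (\<lambda>m. m^2/4 - 1)) holomorphic_on S"
      by (rule holomorphic_on_compose_gen[OF _ hP]) (auto simp: S_def intro!: holomorphic_intros)
    then show ?thesis by (simp add: o_def)
  qed
  have Tsq: "T \<nu> = csqrt ((of_real \<nu>)^2/4 - 1)" for \<nu>
    by (simp add: T_def)
  have inball: "csqrt s \<in> ball 0 r" if "s \<in> ball 0 (r^2)" for s
  proof -
    have "norm s < r^2" using that by simp
    then have "sqrt (norm s) < sqrt (r^2)" by (rule real_sqrt_less_mono)
    then show ?thesis using r by simp
  qed
  have key: "K (T \<nu>) = E (of_real \<nu>) (T \<nu>)" if "\<nu> > 0" for \<nu>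
  proof -
    have h1: "1 + (T \<nu>)^2 = complex_of_real (\<nu>^2/4)" by (simp add: T_def)
    have s: "sqrt (\<nu>^2/4) = \<nu>/2"
      by (rule real_sqrt_unique) (use that in \<open>auto simp: power_divide\<close>)
    have "csqrt (1 + (T \<nu>)^2) = csqrt (complex_of_real (\<nu>^2/4))" by (simp only: h1)
    also have "\<dots> = of_real (sqrt (\<nu>^2/4))" by (rule csqrt_of_real) simp
    also have "\<dots> = of_real (\<nu>/2)" by (simp only: s)
    finally have "2 * csqrt (1 + (T \<nu>)^2) = of_real \<nu>" by (simp add: mult.commute)
    then show ?thesis by (simp add: K_def)
  qed
  obtain e where e: "e > 0" "ball (complex_of_real 2) e \<subseteq> S" using openE[OF oS mS] by blast
  show ?thesis
  proof (intro conjI)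
    show "\<exists>e>0. \<forall>\<nu>. \<bar>\<nu>-2\<bar><e \<longrightarrow> T \<nu> \<in> B"
    proof (intro exI[of _ e] conjI allI impI)
      fix \<nu> :: real assume "\<bar>\<nu>-2\<bar><e"
      then have "complex_of_real \<nu> \<in> S" using e ball_real[of \<nu> 2 e] by auto
      then have "T \<nu> \<in> ball 0 r" unfolding Tsq by (intro inball) (simp add: S_def)
      then show "T \<nu> \<in> B" using r by blast
    qed (use e in auto)
    show "real_analytic_at (\<lambda>\<nu>. E (of_real \<nu>) (T \<nu>)) 2"
    proof (rule RA_hol[OF hG oS mS])
      fix \<nu> assume "complex_of_real \<nu> \<in> S"
      then have "\<nu> > 0" by (simp add: S_def)
      then show "E (of_real \<nu>) (T \<nu>) = K (csqrt ((of_real \<nu>)^2/4 - 1))"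
        using key[of \<nu>] Tsq[of \<nu>] by simp
    qed
  qed
qed



lemma hol_FU2:
  assumes "h holomorphic_on S" "g holomorphic_on S" "\<And>m. m \<in> S \<Longrightarrow> cond z (h m) (g m)"
  shows "(\<lambda>m. FU x t z (h m) (g m)) holomorphic_on S"
  using assms unfolding FU_def cond_def
  by (intro holomorphic_intros) auto

lemma hol_DU2:
  assumes "h holomorphic_on S" "g holomorphic_on S" "\<And>m. m \<in> S \<Longrightarrow> cond z (h m) (g m)"
  shows "(\<lambda>m. DU x t z (h m) (g m)) holomorphic_on S"
  using assms unfolding DU_def cond_def
  by (intro holomorphic_intros) auto

lemma open_cond2:
  fixes A :: "complex set"
  assumes "open A" "continuous_on A g" "continuous_on A h"
  shows "open {m \<in> A. cond z (h m) (g m)}"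
proof -
  define A' where "A' = A \<inter> h -` (- {0})"
  have oA: "open A'" unfolding A'_def
    by (rule continuous_open_preimage[OF assms(3,1)]) auto
  have cA: "continuous_on A' g" "continuous_on A' h" using assms(2,3)
    by (auto simp: A'_def intro: continuous_on_subset)
  have o: "open (A' \<inter> k -` (- \<real>\<^sub>\<le>\<^sub>0))" if "continuous_on A' k" for k :: "complex \<Rightarrow> complex"
    by (rule continuous_open_preimage[OF that oA]) auto
  have nz: "\<And>m. m \<in> A' \<Longrightarrow> h m/2 \<noteq> 0" by (auto simp: A'_def)
  have "{m \<in> A. cond z (h m) (g m)} =
     (A' \<inter> (\<lambda>m. h m/2 - z) -` (- \<real>\<^sub>\<le>\<^sub>0)) \<inter> (A' \<inter> (\<lambda>m. z + g m) -` (- \<real>\<^sub>\<le>\<^sub>0))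
     \<inter> (A' \<inter> (\<lambda>m. -\<i>*(z - g m)) -` (- \<real>\<^sub>\<le>\<^sub>0)) \<inter> (A' \<inter> (\<lambda>m. 1 + g m/(h m/2)) -` (- \<real>\<^sub>\<le>\<^sub>0))
     \<inter> (A' \<inter> (\<lambda>m. 1 - g m/(h m/2)) -` (- \<real>\<^sub>\<le>\<^sub>0))"
    by (auto simp: A'_def cond_def)
  also have "open \<dots>"
    using nz cA by (intro open_Int o continuous_intros) auto
  finally show ?thesis .
qed

lemma FU_even:
  assumes "Im (z+\<tau>) > 0" "Im (z-\<tau>) > 0"
  shows "FU x t z m (-\<tau>) = FU x t z m \<tau>"
proof -
  have e1: "Ln (-\<i>*(z+\<tau>)) = Ln (z+\<tau>) - \<i> * of_real pi / 2"
    using Ln_rot_eq[OF assms(1)] by (simp add: algebra_simps)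
  have e2: "Ln (-\<i>*(z-\<tau>)) = Ln (z-\<tau>) - \<i> * of_real pi / 2"
    using Ln_rot_eq[OF assms(2)] by (simp add: algebra_simps)
  have s: "z - -\<tau> = z + \<tau>" "z + -\<tau> = z - \<tau>" "1 + -\<tau>/(m/2) = 1 - \<tau>/(m/2)" "1 - -\<tau>/(m/2) = 1 + \<tau>/(m/2)"
    by simp_all
  show ?thesis
    unfolding FU_def s e1 e2 by (simp add: field_simps)
qed

lemma DU_even:
  assumes "Im (z+\<tau>) > 0" "Im (z-\<tau>) > 0"
  shows "DU x t z m (-\<tau>) = DU x t z m \<tau>"
proof -
  have e1: "Ln (-\<i>*(z+\<tau>)) = Ln (z+\<tau>) - \<i> * of_real pi / 2"
    using Ln_rot_eq[OF assms(1)] by (simp add: algebra_simps)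
  have e2: "Ln (-\<i>*(z-\<tau>)) = Ln (z-\<tau>) - \<i> * of_real pi / 2"
    using Ln_rot_eq[OF assms(2)] by (simp add: algebra_simps)
  have s: "z - -\<tau> = z + \<tau>" "z + -\<tau> = z - \<tau>"
    by simp_all
  show ?thesis
    unfolding DU_def s e1 e2 by (simp add: field_simps)
qed

lemma m_of_T: "\<nu> > 0 \<Longrightarrow> 2 * csqrt (1 + (T \<nu>)^2) = complex_of_real \<nu>"
proof -
  assume that: "\<nu> > 0"
  have h1: "1 + (T \<nu>)^2 = complex_of_real (\<nu>^2/4)" by (simp add: T_def)
  have s: "sqrt (\<nu>^2/4) = \<nu>/2"
    by (rule real_sqrt_unique) (use that in \<open>auto simp: power_divide\<close>)
  have "csqrt (1 + (T \<nu>)^2) = csqrt (complex_of_real (\<nu>^2/4))" by (simp only: h1)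
  also have "\<dots> = of_real (sqrt (\<nu>^2/4))" by (rule csqrt_of_real) simp
  also have "\<dots> = of_real (\<nu>/2)" by (simp only: s)
  finally show "2 * csqrt (1 + (T \<nu>)^2) = of_real \<nu>" by (simp add: mult.commute)
qed

lemma T_le2: "\<nu>^2/4 - 1 \<le> 0 \<Longrightarrow> T \<nu> = \<i> * of_real (sqrt (1 - \<nu>^2/4))"
  unfolding T_def by (subst csqrt_of_real_nonpos) auto

lemma T_ge2: "\<nu>^2/4 - 1 \<ge> 0 \<Longrightarrow> T \<nu> = of_real (sqrt (\<nu>^2/4 - 1))"
  unfolding T_def by (subst csqrt_of_real_nonneg) auto

lemma case_two_main:
  assumes z: "Im z > 0"
  shows "(\<exists>e>0. \<forall>\<nu>. \<bar>\<nu>-2\<bar><e \<longrightarrow> cond z (of_real \<nu>) (T \<nu>))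
     \<and> real_analytic_at (\<lambda>\<nu>. FU x t z (of_real \<nu>) (T \<nu>)) 2
     \<and> real_analytic_at (\<lambda>\<nu>. DU x t z (of_real \<nu>) (T \<nu>)) 2"
proof -
  define A0 where "A0 = ball 0 (Im z) \<inter> (\<lambda>\<tau>::complex. 1 + \<tau>^2) -` (- \<real>\<^sub>\<le>\<^sub>0)"
  define h where "h \<tau> = 2 * csqrt (1 + \<tau>^2)" for \<tau>
  define B where "B = {\<tau> \<in> A0. cond z (h \<tau>) \<tau>}"
  have oA0: "open A0" unfolding A0_def
    by (intro open_Int open_ball continuous_open_vimage open_Compl closed_nonpos_Reals_complex)
       (auto intro!: continuous_intros)
  have hh: "h holomorphic_on A0" unfolding h_def A0_def
    by (intro holomorphic_intros) auto
  have oB: "open B" unfolding B_def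
    by (rule open_cond2[OF oA0 _ holomorphic_on_imp_continuous_on[OF hh]]) (intro continuous_intros)
  have c0: "cond z 2 0" using z
    by (auto simp: cond_def complex_nonpos_Reals_iff)
  have B0: "0 \<in> B" using z c0 by (simp add: B_def A0_def h_def)
  have hB: "h holomorphic_on B" by (rule holomorphic_on_subset[OF hh]) (auto simp: B_def)
  have cB: "\<And>\<tau>. \<tau> \<in> B \<Longrightarrow> cond z (h \<tau>) \<tau>" by (simp add: B_def)
  have imB: "Im (z+\<tau>) > 0 \<and> Im (z-\<tau>) > 0" if "\<tau> \<in> B" for \<tau>
  proof -
    have "norm \<tau> < Im z" using that by (simp add: B_def A0_def)
    moreover have "\<bar>Im \<tau>\<bar> \<le> norm \<tau>" by (rule abs_Im_le_cmod)
    ultimately show ?thesis by auto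
  qed
  have r1: "(\<exists>e>0. \<forall>\<nu>. \<bar>\<nu>-2\<bar><e \<longrightarrow> T \<nu> \<in> B) \<and> real_analytic_at (\<lambda>\<nu>. FU x t z (of_real \<nu>) (T \<nu>)) 2"
  proof (rule case_two[OF oB B0])
    show "(\<lambda>\<tau>. FU x t z (2 * csqrt (1 + \<tau>\<^sup>2)) \<tau>) holomorphic_on B"
      using hol_FU2[OF hB holomorphic_on_ident cB, of x t] by (simp add: h_def)
    show "FU x t z (2 * csqrt (1 + \<tau>\<^sup>2)) (- \<tau>) = FU x t z (2 * csqrt (1 + \<tau>\<^sup>2)) \<tau>" if "\<tau> \<in> B" for \<tau>
      using imB[OF that] by (intro FU_even) auto
  qed
  have r2: "(\<exists>e>0. \<forall>\<nu>. \<bar>\<nu>-2\<bar><e \<longrightarrow> T \<nu> \<in> B) \<and> real_analytic_at (\<lambda>\<nu>. DU x t z (of_real \<nu>) (T \<nu>)) 2"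
  proof (rule case_two[OF oB B0])
    show "(\<lambda>\<tau>. DU x t z (2 * csqrt (1 + \<tau>\<^sup>2)) \<tau>) holomorphic_on B"
      using hol_DU2[OF hB holomorphic_on_ident cB, of x t] by (simp add: h_def)
    show "DU x t z (2 * csqrt (1 + \<tau>\<^sup>2)) (- \<tau>) = DU x t z (2 * csqrt (1 + \<tau>\<^sup>2)) \<tau>" if "\<tau> \<in> B" for \<tau>
      using imB[OF that] by (intro DU_even) auto
  qed
  obtain e where e: "e > 0" "\<forall>\<nu>. \<bar>\<nu>-2\<bar><e \<longrightarrow> T \<nu> \<in> B" using r1 by blast
  have "\<exists>e>0. \<forall>\<nu>. \<bar>\<nu>-2\<bar><e \<longrightarrow> cond z (of_real \<nu>) (T \<nu>)"
  proof (intro exI[of _ "min e 1"] conjI allI impI)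
    fix \<nu> :: real assume a: "\<bar>\<nu>-2\<bar> < min e 1"
    then have "T \<nu> \<in> B" "\<nu> > 0" using e by auto
    then show "cond z (of_real \<nu>) (T \<nu>)" using cB m_of_T[of \<nu>] by (metis h_def)
  qed (use e in auto)
  then show ?thesis using r1 r2 by blast
qed



lemma cond_imag:
  assumes z: "Im z > 0" and mu: "\<mu> > 0" and s: "s \<ge> 0"
    and seg: "z \<notin> closed_segment (-(\<i> * of_real s)) (\<i> * of_real s)"
  shows "cond z (of_real \<mu>) (\<i> * of_real s)"
proof -
  have d: "(\<i> * of_real s) / (of_real \<mu>/2) = \<i> * of_real (2 * s / \<mu>)"
    using mu by (simp add: field_simps)
  have c3: "-\<i>*(z - \<i> * of_real s) \<notin> \<real>\<^sub>\<le>\<^sub>0"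
  proof
    assume "-\<i>*(z - \<i> * of_real s) \<in> \<real>\<^sub>\<le>\<^sub>0"
    then have h: "Im z \<le> s" "Re z = 0" by (auto simp: complex_nonpos_Reals_iff)
    then have sp: "s > 0" using z by linarith
    define u where "u = (Im z / s + 1) / 2"
    have u: "0 \<le> u" "u \<le> 1" using h z sp by (auto simp: u_def field_simps)
    have "z = (1 - u) *\<^sub>R (-(\<i> * of_real s)) + u *\<^sub>R (\<i> * of_real s)"
      using h sp by (simp add: complex_eq_iff u_def field_simps scaleR_conv_of_real)
    then have "z \<in> closed_segment (-(\<i> * of_real s)) (\<i> * of_real s)"
      unfolding closed_segment_def using u by blast
    then show False using seg by blast
  qed
  show ?thesis
    unfolding cond_def d using z mu s c3 by (auto simp: complex_nonpos_Reals_iff)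
qed

lemma cond_real:
  assumes z: "Im z > 0" and mu: "\<mu> > 0" and s: "s \<ge> 0" "s < \<mu>/2"
  shows "cond z (of_real \<mu>) (of_real s)"
proof -
  have d: "(of_real s) / (of_real \<mu>/2) = (of_real (2 * s / \<mu>) :: complex)"
    using mu by (simp add: field_simps)
  have q: "2 * s / \<mu> < 1" using s mu by (simp add: field_simps)
  have p: "2 * s / \<mu> \<ge> 0" using s mu by simp
  show ?thesis
    unfolding cond_def d using z mu s q by (auto simp: complex_nonpos_Reals_iff) (use p in linarith)
qed

lemma upper:
  assumes z: "Im z > 0" and mu: "\<mu> > 0" and seg: "z \<notin> closed_segment (- T \<mu>) (T \<mu>)"
  shows "(\<exists>e>0. \<forall>\<nu>. \<bar>\<nu>-\<mu>\<bar><e \<longrightarrow> cond z (of_real \<nu>) (T \<nu>))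
     \<and> real_analytic_at (\<lambda>\<nu>. FU x t z (of_real \<nu>) (T \<nu>)) \<mu>
     \<and> real_analytic_at (\<lambda>\<nu>. DU x t z (of_real \<nu>) (T \<nu>)) \<mu>"
proof (cases "\<mu> < 2")
  case True
  define A where "A = (\<lambda>m::complex. 1 - m^2/4) -` (- \<real>\<^sub>\<le>\<^sub>0)"
  define g where "g m = \<i> * csqrt (1 - m^2/4)" for m
  have oA: "open A" unfolding A_def
    by (intro continuous_open_vimage open_Compl closed_nonpos_Reals_complex) (auto intro!: continuous_intros)
  have "\<mu>^2 < 2^2" using True mu by (intro power_strict_mono) auto
  then have m4: "1 - \<mu>^2/4 > 0" by simp
  have mA: "complex_of_real \<mu> \<in> A" unfolding A_def using m4
    by (simp add: complex_nonpos_Reals_iff)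
  have hg: "g holomorphic_on A" unfolding g_def A_def by (intro holomorphic_intros) auto
  have gT: "g (of_real \<nu>) = T \<nu>" if "complex_of_real \<nu> \<in> A" for \<nu>
  proof -
    have "1 - \<nu>^2/4 > 0" using that by (simp add: A_def complex_nonpos_Reals_iff)
    moreover have "1 - (complex_of_real \<nu>)^2/4 = of_real (1 - \<nu>^2/4)" by simp
    ultimately show ?thesis unfolding g_def using T_le2[of \<nu>]
      by (simp add: csqrt_of_real)
  qed
  have "cond z (of_real \<mu>) (\<i> * of_real (sqrt (1 - \<mu>^2/4)))"
    by (rule cond_imag[OF z mu]) (use seg T_le2[of \<mu>] m4 in auto)
  then have c: "cond z (of_real \<mu>) (g (of_real \<mu>))"
    using gT[OF mA] T_le2[of \<mu>] m4 by simp
  show ?thesis by (rule case_gen[OF oA mA hg gT c])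
next
  case False
  show ?thesis
  proof (cases "\<mu> = 2")
    case True
    then show ?thesis using case_two_main[OF z] by simp
  next
    case False2: False
    then have gt: "\<mu> > 2" using False by simp
    define A where "A = (\<lambda>m::complex. m^2/4 - 1) -` (- \<real>\<^sub>\<le>\<^sub>0)"
    define g where "g m = csqrt (m^2/4 - 1)" for m
    have oA: "open A" unfolding A_def
      by (intro continuous_open_vimage open_Compl closed_nonpos_Reals_complex) (auto intro!: continuous_intros)
    have "2^2 < \<mu>^2" using gt by (intro power_strict_mono) auto
    then have m4: "\<mu>^2/4 - 1 > 0" by simp
    have mA: "complex_of_real \<mu> \<in> A" unfolding A_def using m4
      by (simp add: complex_nonpos_Reals_iff)
    have hg: "g holomorphic_on A" unfolding g_def A_def by (intro holomorphic_intros) auto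
    have gT: "g (of_real \<nu>) = T \<nu>" if "complex_of_real \<nu> \<in> A" for \<nu>
      unfolding g_def T_def by simp
    have sl: "sqrt (\<mu>^2/4 - 1) < \<mu>/2"
    proof -
      have "sqrt (\<mu>^2/4 - 1) < sqrt ((\<mu>/2)^2)"
        by (rule real_sqrt_less_mono) (simp add: power_divide)
      then show ?thesis using mu by simp
    qed
    have "cond z (of_real \<mu>) (of_real (sqrt (\<mu>^2/4 - 1)))"
      by (rule cond_real[OF z mu]) (use sl m4 in auto)
    then have c: "cond z (of_real \<mu>) (g (of_real \<mu>))"
      using gT[OF mA] T_ge2[of \<mu>] m4 by simp
    show ?thesis by (rule case_gen[OF oA mA hg gT c])
  qed
qed



lemma deriv_upper:
  assumes z: "Im z > 0" and c: "cond z (of_real \<nu>) (T \<nu>)"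
  shows "deriv (\<lambda>w. f x t w \<nu>) z = DU x t z (of_real \<nu>) (T \<nu>)"
proof -
  have d: "((\<lambda>w. FU x t w (of_real \<nu>) (T \<nu>)) has_field_derivative DU x t z (of_real \<nu>) (T \<nu>)) (at z)"
    by (rule FU_deriv) (use c in \<open>auto simp: cond_def\<close>)
  have "((\<lambda>w. f x t w \<nu>) has_field_derivative DU x t z (of_real \<nu>) (T \<nu>)) (at z)"
    by (rule has_field_derivative_transform_within_open[OF d, of "{w. Im w > 0}"])
       (use z in \<open>auto simp: open_halfspace_Im_gt f_def fu_eq\<close>)
  then show ?thesis by (rule DERIV_imp_deriv)
qed

lemma deriv_lower:
  assumes z: "Im z < 0" and c: "cond (cnj z) (of_real \<nu>) (T \<nu>)"
  shows "deriv (\<lambda>w. f x t w \<nu>) z = cnj (DU x t (cnj z) (of_real \<nu>) (T \<nu>))"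
proof -
  have d: "((\<lambda>w. FU x t w (of_real \<nu>) (T \<nu>)) has_field_derivative DU x t (cnj z) (of_real \<nu>) (T \<nu>)) (at (cnj z))"
    by (rule FU_deriv) (use c in \<open>auto simp: cond_def\<close>)
  have d2: "((cnj \<circ> (\<lambda>w. FU x t w (of_real \<nu>) (T \<nu>)) \<circ> cnj) has_field_derivative cnj (DU x t (cnj z) (of_real \<nu>) (T \<nu>))) (at z)"
    by (rule has_field_derivative_cnj_cnj[OF d])
  have "((\<lambda>w. f x t w \<nu>) has_field_derivative cnj (DU x t (cnj z) (of_real \<nu>) (T \<nu>))) (at z)"
    by (rule has_field_derivative_transform_within_open[OF d2, of "{w. Im w < 0}"])
       (use z in \<open>auto simp: open_halfspace_Im_lt f_def fu_eq\<close>)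
  then show ?thesis by (rule DERIV_imp_deriv)
qed

lemma seg_cnj:
  assumes "cnj z \<in> closed_segment (- T \<mu>) (T \<mu>)"
  shows "z \<in> closed_segment (- T \<mu>) (T \<mu>)"
proof -
  have lin: "linear cnj" by (rule bounded_linear.linear[OF bounded_linear_cnj])
  have "z \<in> cnj ` closed_segment (- T \<mu>) (T \<mu>)"
    using assms by (metis complex_cnj_cnj image_eqI)
  then have zz: "z \<in> closed_segment (cnj (- T \<mu>)) (cnj (T \<mu>))"
    by (simp only: closed_segment_linear_image[OF lin])
  show ?thesis
  proof (cases "\<mu>^2/4 - 1 \<le> 0")
    case True
    then have "cnj (T \<mu>) = - T \<mu>" using T_le2[of \<mu>] by simp
    then show ?thesis using zz by (simp add: closed_segment_commute)
  next
    case False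
    then have "cnj (T \<mu>) = T \<mu>" using T_ge2[of \<mu>] by simp
    then show ?thesis using zz by simp
  qed
qed

theorem lemma3p1:
  fixes x t :: real
  assumes "x > 0" and "t > 0"
  shows "\<forall>z \<mu>. \<mu> > 0 \<and> Im z \<noteq> 0 \<and> z \<notin> closed_segment (- T \<mu>) (T \<mu>) \<longrightarrow>
           real_analytic_at (\<lambda>\<nu>. f x t z \<nu>) \<mu> \<and>
           real_analytic_at (\<lambda>\<nu>. deriv (\<lambda>w. f x t w \<nu>) z) \<mu>"
proof (intro allI impI)
  fix z :: complex and \<mu> :: real
  assume H: "\<mu> > 0 \<and> Im z \<noteq> 0 \<and> z \<notin> closed_segment (- T \<mu>) (T \<mu>)"
  show "real_analytic_at (\<lambda>\<nu>. f x t z \<nu>) \<mu> \<and> real_analytic_at (\<lambda>\<nu>. deriv (\<lambda>w. f x t w \<nu>) z) \<mu>"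
  proof (cases "Im z > 0")
    case True
    obtain e where e: "e > 0" "\<forall>\<nu>. \<bar>\<nu>-\<mu>\<bar><e \<longrightarrow> cond z (of_real \<nu>) (T \<nu>)"
      and r1: "real_analytic_at (\<lambda>\<nu>. FU x t z (of_real \<nu>) (T \<nu>)) \<mu>"
      and r2: "real_analytic_at (\<lambda>\<nu>. DU x t z (of_real \<nu>) (T \<nu>)) \<mu>"
      using upper[OF True, of \<mu> x t] H by blast
    have "(\<lambda>\<nu>. f x t z \<nu>) = (\<lambda>\<nu>. FU x t z (of_real \<nu>) (T \<nu>))"
      using True by (auto simp: f_def fu_eq)
    then have a1: "real_analytic_at (\<lambda>\<nu>. f x t z \<nu>) \<mu>" using r1 by simp
    have a2: "real_analytic_at (\<lambda>\<nu>. deriv (\<lambda>w. f x t w \<nu>) z) \<mu>"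
      by (rule RA_cong[OF r2 e(1)]) (use e(2) deriv_upper[OF True] in blast)
    show ?thesis using a1 a2 by blast
  next
    case False
    then have zl: "Im z < 0" using H by simp
    have zc: "Im (cnj z) > 0" using zl by simp
    have sc: "cnj z \<notin> closed_segment (- T \<mu>) (T \<mu>)" using H seg_cnj by blast
    obtain e where e: "e > 0" "\<forall>\<nu>. \<bar>\<nu>-\<mu>\<bar><e \<longrightarrow> cond (cnj z) (of_real \<nu>) (T \<nu>)"
      and r1: "real_analytic_at (\<lambda>\<nu>. FU x t (cnj z) (of_real \<nu>) (T \<nu>)) \<mu>"
      and r2: "real_analytic_at (\<lambda>\<nu>. DU x t (cnj z) (of_real \<nu>) (T \<nu>)) \<mu>"
      using upper[OF zc, of \<mu> x t] H sc by blast
    have "(\<lambda>\<nu>. f x t z \<nu>) = (\<lambda>\<nu>. cnj (FU x t (cnj z) (of_real \<nu>) (T \<nu>)))"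
      using zl by (auto simp: f_def fu_eq)
    then have a1: "real_analytic_at (\<lambda>\<nu>. f x t z \<nu>) \<mu>" using RA_cnj[OF r1] by simp
    have a2: "real_analytic_at (\<lambda>\<nu>. deriv (\<lambda>w. f x t w \<nu>) z) \<mu>"
      by (rule RA_cong[OF RA_cnj[OF r2] e(1)]) (use e(2) deriv_lower[OF zl] in blast)
    show ?thesis using a1 a2 by blast
  qed
qed

end
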